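(* Let $z\in\mathbb{C}$ and $\omega_0,\dots,\omega_r\in\mathbb{C}$ with $\omega_0,\dots,\omega_r,\omega_0+\omega_1\in\mathbb{C}\setminus\mathbb{R}$. Then $$\frac{G_r(z|\omega_0,\omega_1,\omega_2,\dots,\omega_r)}{G_r(z|\omega_0,\omega_0+\omega_1,\omega_2,\dots,\omega_r)}=\frac{1}{G_r(z|-\omega_1,\omega_0+\omega_1,\omega_2,\dots,\omega_r)}.$$
   Context: Let $x=e^{2\pi iz}$, $q_j=e^{2\pi i\omega_j}$. q-shifted factorial: if all $|q_j|<1$, $(x|q_0,\dots,q_r)_\infty=\prod_{j_0,\dots,j_r\ge0}(1-xq_0^{j_0}\cdots q_r^{j_r})$; in general (symmetric in the $q_j$), if $|q_0|,\dots,|q_{k-1}|>1$ and the others $<1$, $(x|\underline q)_\infty=((q_0\cdots q_{k-1})^{-1}x|q_0^{-1},\dots,q_{k-1}^{-1},q_k,\dots,q_r)_\infty^{(-1)^k}$. Multiple elliptic gamma function: for $\omega_j\in\mathbb{C}\setminus\mathbb{R}$, $G_r(z|\omega_0,\dots,\omega_r)=(x^{-1}q_0\cdots q_r|q_0,\dots,q_r)_\infty\,(x|q_0,\dots,q_r)_\infty^{(-1)^r}$. *)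

theory Defs
  imports Complex_Main
begin

definition qpoch_box :: "complex \<Rightarrow> complex list \<Rightarrow> nat \<Rightarrow> complex" where
  "qpoch_box x qs N =
     (\<Prod>js \<in> {js. length js = length qs \<and> (\<forall>j\<in>set js. j < N)}.
        1 - x * prod_list (map2 (\<lambda>q j. q ^ j) qs js))"

text \<open>(x | q_0,...,q_r)_\<infinity> for |q_j| < 1: the (absolutely convergent) infinite product
  over N^(r+1), as the limit of the box partial products.\<close>
definition qpoch_conv :: "complex \<Rightarrow> complex list \<Rightarrow> complex" where
  "qpoch_conv x qs = lim (qpoch_box x qs)"

definition qpoch :: "complex \<Rightarrow> complex list \<Rightarrow> complex" where
  "qpoch x qs =
     (let big = filter (\<lambda>q. norm q > 1) qs;
          qs' = map (\<lambda>q. if norm q > 1 then inverse q else q) qs;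
          x' = inverse (prod_list big) * x
      in if even (length big) then qpoch_conv x' qs' else inverse (qpoch_conv x' qs'))"

text \<open>Multiple elliptic gamma function G_r(z | \<omega>_0,...,\<omega>_r), with r = length ws - 1.\<close>
definition ell_gamma :: "complex \<Rightarrow> complex list \<Rightarrow> complex" where
  "ell_gamma z ws =
     (let x = exp (2 * pi * \<i> * z);
          qs = map (\<lambda>w. exp (2 * pi * \<i> * w)) ws;
          A = qpoch (inverse x * prod_list qs) qs;
          B = qpoch x qs
      in A * (if even (length ws - 1) then B else inverse B))"

end

theory Submission
  imports Defs "HOL-Analysis.Analysis"
begin

definition tprod :: "('a \<Rightarrow> complex) \<Rightarrow> 'a set \<Rightarrow> complex \<Rightarrow> bool" where
  "tprod f A p \<longleftrightarrow> ((\<lambda>F. \<Prod>i\<in>F. f i) \<longlongrightarrow> p) (finite_subsets_at_top A)"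

lemma tprod_unique: "tprod f A p \<Longrightarrow> tprod f A q \<Longrightarrow> p = q"
  unfolding tprod_def by (rule tendsto_unique) auto

lemma filterlim_Int_fsat:
  assumes "B \<subseteq> A"
  shows "filterlim (\<lambda>F. F \<inter> B) (finite_subsets_at_top B) (finite_subsets_at_top A)"
  unfolding filterlim_finite_subsets_at_top
proof (intro allI impI)
  fix X assume X: "finite X \<and> X \<subseteq> B"
  show "\<forall>\<^sub>F y in finite_subsets_at_top A. finite (y \<inter> B) \<and> X \<subseteq> y \<inter> B \<and> y \<inter> B \<subseteq> B"
    unfolding eventually_finite_subsets_at_top
    by (rule exI[of _ X]) (use X assms in auto)
qed

lemma tprod_cong:
  assumes "\<And>x. x \<in> A \<Longrightarrow> f x = g x" "tprod f A p"
  shows "tprod g A p"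
proof -
  have "\<forall>\<^sub>F F in finite_subsets_at_top A. (\<Prod>i\<in>F. f i) = (\<Prod>i\<in>F. g i)"
    by (rule eventually_finite_subsets_at_top_weakI) (use assms(1) in \<open>auto intro!: prod.cong\<close>)
  thus ?thesis using assms(2) unfolding tprod_def by (rule tendsto_cong[THEN iffD1])
qed

lemma tprod_Un:
  assumes "A \<inter> B = {}" "tprod f A p" "tprod f B q"
  shows "tprod f (A \<union> B) (p * q)"
proof -
  have 1: "((\<lambda>F. \<Prod>i\<in>F \<inter> A. f i) \<longlongrightarrow> p) (finite_subsets_at_top (A \<union> B))"
    using filterlim_compose[OF assms(2)[unfolded tprod_def] filterlim_Int_fsat[of A "A \<union> B"]] by auto
  have 2: "((\<lambda>F. \<Prod>i\<in>F \<inter> B. f i) \<longlongrightarrow> q) (finite_subsets_at_top (A \<union> B))"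
    using filterlim_compose[OF assms(3)[unfolded tprod_def] filterlim_Int_fsat[of B "A \<union> B"]] by auto
  have 3: "((\<lambda>F. (\<Prod>i\<in>F \<inter> A. f i) * (\<Prod>i\<in>F \<inter> B. f i)) \<longlongrightarrow> p * q) (finite_subsets_at_top (A \<union> B))"
    by (rule tendsto_mult[OF 1 2])
  have "\<forall>\<^sub>F F in finite_subsets_at_top (A \<union> B). (\<Prod>i\<in>F \<inter> A. f i) * (\<Prod>i\<in>F \<inter> B. f i) = (\<Prod>i\<in>F. f i)"
  proof (rule eventually_finite_subsets_at_top_weakI)
    fix F assume F: "finite F" "F \<subseteq> A \<union> B"
    have "F = (F \<inter> A) \<union> (F \<inter> B)" using F by auto
    hence "(\<Prod>i\<in>F. f i) = (\<Prod>i\<in>(F \<inter> A) \<union> (F \<inter> B). f i)" by simp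
    also have "\<dots> = (\<Prod>i\<in>F \<inter> A. f i) * (\<Prod>i\<in>F \<inter> B. f i)"
      by (rule prod.union_disjoint) (use F assms(1) in auto)
    finally show "(\<Prod>i\<in>F \<inter> A. f i) * (\<Prod>i\<in>F \<inter> B. f i) = (\<Prod>i\<in>F. f i)" by simp
  qed
  thus ?thesis unfolding tprod_def by (rule tendsto_cong[THEN iffD1, OF _ 3])
qed

lemma tprod_reindex:
  assumes "inj_on h A" "tprod f (h ` A) p"
  shows "tprod (f \<circ> h) A p"
proof -
  have "((\<lambda>F. \<Prod>i\<in>F. f i) \<longlongrightarrow> p) (filtermap ((`) h) (finite_subsets_at_top A))"
    using assms(2) unfolding tprod_def filtermap_image_finite_subsets_at_top[OF assms(1)] .
  hence 1: "((\<lambda>F. \<Prod>i\<in>h ` F. f i) \<longlongrightarrow> p) (finite_subsets_at_top A)"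
    by (simp add: filterlim_filtermap)
  have "\<forall>\<^sub>F F in finite_subsets_at_top A. (\<Prod>i\<in>h ` F. f i) = (\<Prod>i\<in>F. (f \<circ> h) i)"
  proof (rule eventually_finite_subsets_at_top_weakI)
    fix F assume "finite F" "F \<subseteq> A"
    hence "inj_on h F" using assms(1) inj_on_subset by blast
    thus "(\<Prod>i\<in>h ` F. f i) = (\<Prod>i\<in>F. (f \<circ> h) i)" by (simp add: prod.reindex)
  qed
  thus ?thesis unfolding tprod_def by (rule tendsto_cong[THEN iffD1, OF _ 1])
qed

lemma tprod_finite: "finite A \<Longrightarrow> tprod f A (\<Prod>i\<in>A. f i)"
  unfolding tprod_def by (simp add: finite_subsets_at_top_finite tendsto_principal_singleton)

lemma tprod_exists:
  assumes sm: "(\<lambda>i. norm (f i - 1)) summable_on A"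
  shows "\<exists>p. tprod f A p"
proof -
  define S where "S = {i\<in>A. norm (f i - 1) \<ge> 1/2}"
  have finS: "finite S"
  proof (rule ccontr)
    assume "infinite S"
    define C where "C = infsum (\<lambda>i. norm (f i - 1)) A"
    obtain n :: nat where n: "real n > 2 * C" using reals_Archimedean2 by blast
    obtain T where T: "T \<subseteq> S" "finite T" "card T = n"
      using \<open>infinite S\<close> infinite_arbitrarily_large by blast
    have "(\<Sum>i\<in>T. norm (f i - 1)) \<le> C"
      unfolding C_def by (rule finite_sum_le_infsum[OF sm T(2)]) (use T(1) S_def in auto)
    moreover have "(\<Sum>i\<in>T. (1/2::real)) \<le> (\<Sum>i\<in>T. norm (f i - 1))"
      by (rule sum_mono) (use T(1) S_def in auto)
    ultimately show False using T(3) n by simp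
  qed
  define g where "g i = Ln (f i)" for i
  have small: "norm (f i - 1) < 1/2" if "i \<in> A - S" for i using that S_def by auto
  have gb: "norm (g i) \<le> 2 * norm (f i - 1)" if "i \<in> A - S" for i
    using norm_Ln_le[OF small[OF that]] unfolding g_def by simp
  have "(\<lambda>i. 2 * norm (f i - 1)) summable_on (A - S)"
    by (rule summable_on_cmult_right, rule summable_on_subset[OF sm]) auto
  hence "(\<lambda>i. norm (g i)) summable_on (A - S)"
    by (rule summable_on_comparison_test) (use gb in auto)
  hence "g summable_on (A - S)" by (rule abs_summable_summable)
  then obtain L where L: "(g has_sum L) (A - S)" using summable_on_def by blast
  hence "((\<lambda>F. sum g F) \<longlongrightarrow> L) (finite_subsets_at_top (A - S))" by (simp add: has_sum_def)
  hence 1: "((\<lambda>F. exp (sum g F)) \<longlongrightarrow> exp L) (finite_subsets_at_top (A - S))"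
    by (rule tendsto_exp)
  have "\<forall>\<^sub>F F in finite_subsets_at_top (A - S). exp (sum g F) = (\<Prod>i\<in>F. f i)"
  proof (rule eventually_finite_subsets_at_top_weakI)
    fix F assume F: "finite F" "F \<subseteq> A - S"
    have "exp (sum g F) = (\<Prod>i\<in>F. exp (g i))" using F(1) by (simp add: exp_sum)
    also have "\<dots> = (\<Prod>i\<in>F. f i)"
    proof (rule prod.cong[OF refl])
      fix i assume "i \<in> F"
      hence "norm (f i - 1) < 1/2" using F small by auto
      hence "f i \<noteq> 0" by auto
      thus "exp (g i) = f i" unfolding g_def by simp
    qed
    finally show "exp (sum g F) = (\<Prod>i\<in>F. f i)" .
  qed
  hence "tprod f (A - S) (exp L)" unfolding tprod_def by (rule tendsto_cong[THEN iffD1, OF _ 1])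
  hence "tprod f (S \<union> (A - S)) ((\<Prod>i\<in>S. f i) * exp L)"
    by (intro tprod_Un tprod_finite finS) auto
  moreover have "S \<union> (A - S) = A" using S_def by auto
  ultimately have "tprod f A ((\<Prod>i\<in>S. f i) * exp L)" by (simp only:)
  thus ?thesis by blast
qed

definition L :: "nat \<Rightarrow> nat list set" where "L n = {js. length js = n}"
definition mterm :: "complex list \<Rightarrow> nat list \<Rightarrow> complex" where
  "mterm qs js = prod_list (map2 (\<lambda>q j. q ^ j) qs js)"

lemma mterm_Cons [simp]: "mterm (q # qs) (j # js) = q ^ j * mterm qs js"
  by (simp add: mterm_def)
lemma mterm_Nil [simp]: "mterm [] js = 1"
  by (simp add: mterm_def)

lemma L_Cons: "L (Suc n) = (\<lambda>(j, r). j # r) ` (UNIV \<times> L n)"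
  unfolding L_def by (auto simp: length_Suc_conv image_iff)

lemma mterm_bound:
  assumes "\<forall>q\<in>set qs. norm q < 1" "finite F" "F \<subseteq> L (length qs)"
  shows "(\<Sum>js\<in>F. norm (mterm qs js)) \<le> (\<Prod>q\<leftarrow>qs. 1 / (1 - norm q))"
  using assms
proof (induction qs arbitrary: F)
  case Nil
  hence "F \<subseteq> {[]}" by (auto simp: L_def)
  hence "F = {} \<or> F = {[]}" by blast
  thus ?case by auto
next
  case (Cons q qs)
  define J where "J = hd ` F"
  define R where "R = tl ` F"
  have finJ: "finite J" "finite R" using Cons.prems J_def R_def by auto
  have RL: "R \<subseteq> L (length qs)" using Cons.prems(3) unfolding R_def L_def by auto
  have FG: "F \<subseteq> (\<lambda>(j, r). j # r) ` (J \<times> R)"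
  proof
    fix js assume js: "js \<in> F"
    then obtain j r where e: "js = j # r" using Cons.prems(3) by (cases js) (auto simp: L_def)
    have "j \<in> J" unfolding J_def using js e by (metis list.sel(1) rev_image_eqI)
    moreover have "r \<in> R" unfolding R_def using js e by (metis list.sel(3) rev_image_eqI)
    ultimately have "(j, r) \<in> J \<times> R" by simp
    thus "js \<in> (\<lambda>(j, r). j # r) ` (J \<times> R)" using e by (metis (no_types, lifting) case_prod_conv rev_image_eqI)
  qed
  have nq: "norm q < 1" using Cons.prems(1) by auto
  have inj: "inj_on (\<lambda>(j, r). j # r) (J \<times> R)" by (auto simp: inj_on_def)
  have "(\<Sum>js\<in>F. norm (mterm (q # qs) js)) \<le> (\<Sum>js\<in>(\<lambda>(j, r). j # r) ` (J \<times> R). norm (mterm (q # qs) js))"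
    by (rule sum_mono2) (use FG finJ in simp_all)
  also have "\<dots> = (\<Sum>x\<in>J \<times> R. ((\<lambda>js. norm (mterm (q # qs) js)) \<circ> (\<lambda>(j, r). j # r)) x)"
    by (rule sum.reindex[OF inj])
  also have "\<dots> = (\<Sum>(j, r)\<in>J \<times> R. norm q ^ j * norm (mterm qs r))"
    by (rule sum.cong) (auto simp: norm_mult norm_power)
  also have "\<dots> = (\<Sum>j\<in>J. norm q ^ j) * (\<Sum>r\<in>R. norm (mterm qs r))"
    by (simp only: sum_product sum.cartesian_product)
  also have "\<dots> \<le> (1 / (1 - norm q)) * (\<Prod>q\<leftarrow>qs. 1 / (1 - norm q))"
  proof (rule mult_mono)
    have "(\<Sum>j\<in>J. norm q ^ j) \<le> suminf (\<lambda>j. norm q ^ j)"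
      by (rule sum_le_suminf) (use nq finJ in auto)
    also have "\<dots> = 1 / (1 - norm q)" using nq by (simp add: suminf_geometric)
    finally show "(\<Sum>j\<in>J. norm q ^ j) \<le> 1 / (1 - norm q)" .
    show "(\<Sum>r\<in>R. norm (mterm qs r)) \<le> (\<Prod>q\<leftarrow>qs. 1 / (1 - norm q))"
      by (rule Cons.IH) (use Cons.prems finJ RL in auto)
    show "0 \<le> 1 / (1 - norm q)" using nq by simp
    show "0 \<le> (\<Sum>r\<in>R. norm (mterm qs r))" by (rule sum_nonneg) simp
  qed
  finally show ?case by (simp only: list.map prod_list.Cons)
qed

lemma mterm_summable:
  assumes "\<forall>q\<in>set qs. norm q < 1"
  shows "(\<lambda>js. norm (x * mterm qs js - 0)) summable_on L (length qs)"
proof -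
  have "(\<lambda>js. norm (mterm qs js)) summable_on L (length qs)"
  proof (rule nonneg_bdd_above_summable_on)
    show "bdd_above (sum (\<lambda>js. norm (mterm qs js)) ` {F. F \<subseteq> L (length qs) \<and> finite F})"
      by (rule bdd_aboveI2[where M = "\<Prod>q\<leftarrow>qs. 1 / (1 - norm q)"]) (use mterm_bound[OF assms] in auto)
  qed auto
  hence "(\<lambda>js. norm x * norm (mterm qs js)) summable_on L (length qs)"
    by (rule summable_on_cmult_right)
  thus ?thesis by (simp add: norm_mult)
qed

definition T :: "complex \<Rightarrow> complex list \<Rightarrow> nat list \<Rightarrow> complex" where
  "T x qs js = 1 - x * mterm qs js"

lemma T_exists:
  assumes "\<forall>q\<in>set qs. norm q < 1" "A \<subseteq> L (length qs)"
  shows "\<exists>p. tprod (T x qs) A p"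
proof (rule tprod_exists)
  have "(\<lambda>js. norm (T x qs js - 1)) summable_on L (length qs)"
    using mterm_summable[OF assms(1), of "-x"] by (simp add: T_def)
  thus "(\<lambda>js. norm (T x qs js - 1)) summable_on A"
    by (rule summable_on_subset[OF _ assms(2)])
qed

lemma conv_eq:
  assumes "tprod (T x qs) (L (length qs)) p"
  shows "qpoch_conv x qs = p"
proof -
  define B :: "nat \<Rightarrow> nat list set" where "B N = {js. length js = length qs \<and> (\<forall>j\<in>set js. j < N)}" for N
  have finB: "finite (B N)" for N
  proof -
    have "B N \<subseteq> {xs. set xs \<subseteq> {..<N} \<and> length xs = length qs}" unfolding B_def by auto
    moreover have "finite {xs. set xs \<subseteq> {..<N} \<and> length xs = length qs}"
      by (intro finite_lists_length_eq) simp
    ultimately show ?thesis by (rule finite_subset)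
  qed
  have lim: "filterlim B (finite_subsets_at_top (L (length qs))) sequentially"
    unfolding filterlim_finite_subsets_at_top
  proof (intro allI impI)
    fix X assume X: "finite X \<and> X \<subseteq> L (length qs)"
    define N0 where "N0 = Suc (Max (insert 0 (\<Union>js\<in>X. set js)))"
    have fin: "finite (insert 0 (\<Union>js\<in>X. set js))" using X by auto
    show "\<forall>\<^sub>F N in sequentially. finite (B N) \<and> X \<subseteq> B N \<and> B N \<subseteq> L (length qs)"
      unfolding eventually_sequentially
    proof (rule exI[of _ N0], intro allI impI conjI)
      fix N assume N: "N0 \<le> N"
      show "finite (B N)" by (rule finB)
      show "X \<subseteq> B N"
      proof
        fix js assume js: "js \<in> X"
        have "\<forall>j\<in>set js. j < N"
        proof
          fix j assume "j \<in> set js"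
          hence "j \<le> Max (insert 0 (\<Union>js\<in>X. set js))" using js fin by (intro Max_ge) auto
          thus "j < N" using N N0_def by simp
        qed
        thus "js \<in> B N" using js X unfolding B_def L_def by auto
      qed
      show "B N \<subseteq> L (length qs)" unfolding B_def L_def by auto
    qed
  qed
  have "((\<lambda>N. \<Prod>js\<in>B N. T x qs js) \<longlongrightarrow> p) sequentially"
    using filterlim_compose[OF assms[unfolded tprod_def] lim] .
  moreover have "(\<lambda>N. \<Prod>js\<in>B N. T x qs js) = qpoch_box x qs"
    by (rule ext) (simp add: qpoch_box_def B_def T_def mterm_def)
  ultimately have "qpoch_box x qs \<longlonglongrightarrow> p" by (simp only:)
  thus ?thesis unfolding qpoch_conv_def by (rule limI)
qed

lemma nm_mult_small:
  assumes "norm (A::complex) < 1" "norm B < 1"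
  shows "norm (A * B) < 1"
proof -
  have "norm A * norm B \<le> norm A * 1" by (rule mult_left_mono) (use assms in auto)
  thus ?thesis using assms by (simp add: norm_mult)
qed

lemma L2_iff: "js \<in> L (Suc (Suc n)) \<longleftrightarrow> (\<exists>k m r. js = k # m # r \<and> r \<in> L n)"
  unfolding L_def by (auto simp: length_Suc_conv)

definition h1 :: "nat list \<Rightarrow> nat list" where
  "h1 js = (case js of k # m # r \<Rightarrow> (k + m) # m # r | _ \<Rightarrow> js)"
definition h2 :: "nat list \<Rightarrow> nat list" where
  "h2 js = (case js of k # m # r \<Rightarrow> m # (k + m + 1) # r | _ \<Rightarrow> js)"
definition hs :: "nat list \<Rightarrow> nat list" where
  "hs js = (case js of k # m # r \<Rightarrow> m # k # r | _ \<Rightarrow> js)"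

lemma h1_simp [simp]: "h1 (k # m # r) = (k + m) # m # r" by (simp add: h1_def)
lemma h2_simp [simp]: "h2 (k # m # r) = m # (k + m + 1) # r" by (simp add: h2_def)
lemma hs_simp [simp]: "hs (k # m # r) = m # k # r" by (simp add: hs_def)

lemma inj_h1: "inj_on h1 (L (Suc (Suc n)))"
  by (auto simp: inj_on_def L2_iff)
lemma inj_h2: "inj_on h2 (L (Suc (Suc n)))"
  by (auto simp: inj_on_def L2_iff)
lemma inj_hs: "inj_on hs (L (Suc (Suc n)))"
  by (auto simp: inj_on_def L2_iff)

lemma hs_img: "hs ` L (Suc (Suc n)) = L (Suc (Suc n))"
proof
  show "hs ` L (Suc (Suc n)) \<subseteq> L (Suc (Suc n))" by (auto simp: L2_iff)
  show "L (Suc (Suc n)) \<subseteq> hs ` L (Suc (Suc n))"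
  proof
    fix js assume "js \<in> L (Suc (Suc n))"
    then obtain k m r where "js = k # m # r" "r \<in> L n" by (auto simp: L2_iff)
    thus "js \<in> hs ` L (Suc (Suc n))" by (intro image_eqI[of _ _ "m # k # r"]) (auto simp: L2_iff)
  qed
qed

lemma h12_Un: "h1 ` L (Suc (Suc n)) \<union> h2 ` L (Suc (Suc n)) = L (Suc (Suc n))"
proof
  show "h1 ` L (Suc (Suc n)) \<union> h2 ` L (Suc (Suc n)) \<subseteq> L (Suc (Suc n))" by (auto simp: L2_iff)
  show "L (Suc (Suc n)) \<subseteq> h1 ` L (Suc (Suc n)) \<union> h2 ` L (Suc (Suc n))"
  proof
    fix js assume "js \<in> L (Suc (Suc n))"
    then obtain k m r where js: "js = k # m # r" "r \<in> L n" by (auto simp: L2_iff)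
    show "js \<in> h1 ` L (Suc (Suc n)) \<union> h2 ` L (Suc (Suc n))"
    proof (cases "m \<le> k")
      case True
      have "js \<in> h1 ` L (Suc (Suc n))"
        by (rule image_eqI[of _ _ "(k - m) # m # r"]) (use True js in \<open>auto simp: L2_iff\<close>)
      thus ?thesis by blast
    next
      case False
      have "js \<in> h2 ` L (Suc (Suc n))"
        by (rule image_eqI[of _ _ "(m - k - 1) # k # r"]) (use False js in \<open>auto simp: L2_iff\<close>)
      thus ?thesis by blast
    qed
  qed
qed

lemma h12_disj: "h1 ` L (Suc (Suc n)) \<inter> h2 ` L (Suc (Suc n)) = {}"
  by (auto simp: L2_iff)

lemma conv_split:
  assumes "\<forall>q\<in>set (a # b # W). norm q < 1"
  shows "qpoch_conv y (a # b # W) = qpoch_conv y (a # (a * b) # W) * qpoch_conv (y * b) (b # (a * b) # W)"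
proof -
  define n where "n = length W"
  define I where "I = L (Suc (Suc n))"
  have ab: "norm (a * b) < 1" using assms nm_mult_small by simp
  have sm1: "\<forall>q\<in>set (a # (a * b) # W). norm q < 1" and sm2: "\<forall>q\<in>set (b # (a * b) # W). norm q < 1"
    using assms ab by auto
  have s1: "h1 ` I \<subseteq> L (length (a # b # W))" "h2 ` I \<subseteq> L (length (a # b # W))"
    using h12_Un[of n] unfolding I_def n_def by auto
  obtain p1 where p1: "tprod (T y (a # b # W)) (h1 ` I) p1"
    using T_exists[OF assms s1(1)] by blast
  obtain p2 where p2: "tprod (T y (a # b # W)) (h2 ` I) p2"
    using T_exists[OF assms s1(2)] by blast
  have "tprod (T y (a # b # W)) (h1 ` I \<union> h2 ` I) (p1 * p2)"
    by (rule tprod_Un[OF _ p1 p2]) (simp add: I_def h12_disj)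
  hence "tprod (T y (a # b # W)) (L (length (a # b # W))) (p1 * p2)"
    by (simp add: I_def h12_Un n_def)
  hence e0: "qpoch_conv y (a # b # W) = p1 * p2" by (rule conv_eq)
  have "tprod (T y (a # b # W) \<circ> h1) I p1" by (rule tprod_reindex[OF _ p1]) (simp add: I_def inj_h1)
  hence "tprod (T y (a # (a * b) # W)) I p1"
    by (rule tprod_cong[rotated]) (auto simp: I_def L2_iff T_def power_add power_mult_distrib)
  hence e1: "qpoch_conv y (a # (a * b) # W) = p1" by (intro conv_eq) (simp add: I_def n_def)
  have "tprod (T y (a # b # W) \<circ> h2) I p2" by (rule tprod_reindex[OF _ p2]) (simp add: I_def inj_h2)
  hence "tprod (T (y * b) (b # (a * b) # W)) I p2"
    by (rule tprod_cong[rotated]) (auto simp: I_def L2_iff T_def power_add power_mult_distrib)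
  hence e2: "qpoch_conv (y * b) (b # (a * b) # W) = p2" by (intro conv_eq) (simp add: I_def n_def)
  show ?thesis using e0 e1 e2 by simp
qed

lemma conv_swap:
  assumes "\<forall>q\<in>set (a # b # W). norm q < 1"
  shows "qpoch_conv y (a # b # W) = qpoch_conv y (b # a # W)"
proof -
  define I where "I = L (Suc (Suc (length W)))"
  obtain p where p: "tprod (T y (a # b # W)) (hs ` I) p"
    using T_exists[OF assms, of "hs ` I" y] hs_img unfolding I_def by auto
  hence e0: "qpoch_conv y (a # b # W) = p" by (intro conv_eq) (simp add: I_def hs_img)
  have "tprod (T y (a # b # W) \<circ> hs) I p" by (rule tprod_reindex[OF _ p]) (simp add: I_def inj_hs)
  hence "tprod (T y (b # a # W)) I p"
    by (rule tprod_cong[rotated]) (auto simp: I_def L2_iff T_def)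
  hence "qpoch_conv y (b # a # W) = p" by (intro conv_eq) (simp add: I_def)
  thus ?thesis using e0 by simp
qed

abbreviation conv where "conv \<equiv> qpoch_conv"

lemma S_ge:
  assumes "norm A < 1" "norm B < 1" "\<forall>q\<in>set V. norm q < 1"
  shows "conv Y (A # B # V) = conv Y (A # (A * B) # V) * conv (Y * B) (B # (A * B) # V)"
  by (rule conv_split) (use assms in auto)

lemma Swp:
  assumes "norm A < 1" "norm B < 1" "\<forall>q\<in>set V. norm q < 1"
  shows "conv Y (A # B # V) = conv Y (B # A # V)"
  by (rule conv_swap) (use assms in auto)


lemma S_gt:
  assumes "norm A < 1" "norm B < 1" "\<forall>q\<in>set V. norm q < 1"
  shows "conv Y (A # B # V) = conv (Y * A) (A # (A * B) # V) * conv Y (B # (A * B) # V)"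
proof -
  have ab: "norm (A * B) < 1" using assms nm_mult_small by blast
  have "conv Y (A # B # V) = conv Y (B # A # V)" using Swp assms by blast
  also have "\<dots> = conv Y (B # (B * A) # V) * conv (Y * A) (A # (B * A) # V)"
    using S_ge[of B A V Y] assms by blast
  also have "\<dots> = conv Y (B # (A * B) # V) * conv (Y * A) (A # (A * B) # V)"
    by (simp add: mult.commute)
  finally show ?thesis by (simp add: mult.commute)
qed

definition fl :: "complex \<Rightarrow> complex" where "fl q = (if 1 < norm q then inverse q else q)"
definition bg :: "complex \<Rightarrow> complex" where "bg q = (if 1 < norm q then q else 1)"
definition cn :: "complex \<Rightarrow> nat" where "cn q = (if 1 < norm q then 1 else 0)"
definition par :: "nat \<Rightarrow> complex \<Rightarrow> complex" where "par k z = (if even k then z else inverse z)"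

definition fc :: "complex list \<Rightarrow> complex \<Rightarrow> complex \<Rightarrow> complex \<Rightarrow> complex" where
  "fc V Y a b = par (cn a + cn b) (conv (inverse (bg a * bg b) * Y) (fl a # fl b # V))"

lemma inv_small: "1 < norm (a::complex) \<Longrightarrow> norm (inverse a) < 1"
  by (simp add: norm_inverse inverse_less_1_iff)
lemma inv_big: "norm (a::complex) < 1 \<Longrightarrow> a \<noteq> 0 \<Longrightarrow> 1 < norm (inverse a)"
  by (simp add: norm_inverse one_less_inverse)

lemma core:
  assumes a0: "a \<noteq> 0" and b0: "b \<noteq> 0" and na: "norm a \<noteq> 1" and nb: "norm b \<noteq> 1"
    and nab: "norm (a * b) \<noteq> 1" and V: "\<forall>q\<in>set V. norm q < 1"
    and nz1: "fc V Y a (a * b) \<noteq> 0" and nz2: "fc V (Y * b) b (a * b) \<noteq> 0"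
  shows "fc V Y a b = fc V Y a (a * b) * fc V (Y * b) b (a * b)"
proof -
  have nmab: "norm (a * b) = norm a * norm b" by (simp add: norm_mult)
  consider "norm a < 1" "norm b < 1" "norm (a * b) < 1"
    | "1 < norm a" "1 < norm b" "1 < norm (a * b)"
    | "norm a < 1" "1 < norm b" "norm (a * b) < 1"
    | "norm a < 1" "1 < norm b" "1 < norm (a * b)"
    | "1 < norm a" "norm b < 1" "norm (a * b) < 1"
    | "1 < norm a" "norm b < 1" "1 < norm (a * b)"
  proof -
    have "norm a < 1 \<or> 1 < norm a" "norm b < 1 \<or> 1 < norm b" "norm (a*b) < 1 \<or> 1 < norm (a*b)"
      using na nb nab by linarith+
    moreover have "norm a < 1 \<Longrightarrow> norm b < 1 \<Longrightarrow> norm (a*b) < 1" by (rule nm_mult_small)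
    moreover have "1 < norm a \<Longrightarrow> 1 < norm b \<Longrightarrow> 1 < norm (a*b)"
      unfolding nmab by (metis less_1_mult)
    ultimately show ?thesis using that by blast
  qed
  thus ?thesis
  proof cases
    case 1
    have e: "fc V Y a b = conv Y (a # b # V)" "fc V Y a (a * b) = conv Y (a # (a*b) # V)"
      "fc V (Y * b) b (a * b) = conv (Y * b) (b # (a*b) # V)"
      using 1 by (simp_all add: fc_def fl_def bg_def cn_def par_def)
    show ?thesis unfolding e by (rule S_ge) (use 1 V in auto)
  next
    case 2
    have e: "fc V Y a b = conv (inverse (a*b) * Y) (inverse a # inverse b # V)"
      "fc V Y a (a * b) = conv (inverse (a*b) * Y * inverse a) (inverse a # (inverse a * inverse b) # V)"
      "fc V (Y * b) b (a * b) = conv (inverse (a*b) * Y) (inverse b # (inverse a * inverse b) # V)"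
      using 2 a0 b0 by (simp_all add: fc_def fl_def bg_def cn_def par_def field_simps)
    show ?thesis unfolding e by (rule S_gt) (use 2 V inv_small in auto)
  next
    case 3
    define K1 where "K1 = conv (Y * inverse b) (a # inverse b # V)"
    define K2 where "K2 = conv Y (a # (a*b) # V)"
    define K3 where "K3 = conv Y (inverse b # (a*b) # V)"
    have e: "fc V Y a b = inverse K1" "fc V Y a (a * b) = K2" "fc V (Y * b) b (a * b) = inverse K3"
      using 3 a0 b0 unfolding K1_def K2_def K3_def by (simp_all add: fc_def fl_def bg_def cn_def par_def field_simps)
    have sb: "norm (inverse b) < 1" using 3 inv_small by blast
    have "K3 = conv Y ((a*b) # inverse b # V)" unfolding K3_def by (rule Swp) (use 3 V sb in auto)
    also have "\<dots> = conv Y ((a*b) # ((a*b) * inverse b) # V) * conv (Y * inverse b) (inverse b # ((a*b) * inverse b) # V)"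
      by (rule S_ge) (use 3 V sb in auto)
    also have "(a*b) * inverse b = a" using b0 by simp
    also have "conv Y ((a*b) # a # V) = K2" unfolding K2_def by (rule Swp) (use 3 V in auto)
    also have "conv (Y * inverse b) (inverse b # a # V) = K1" unfolding K1_def by (rule Swp) (use 3 V sb in auto)
    finally have K: "K3 = K2 * K1" .
    show ?thesis using nz1 nz2 unfolding e K by (simp add: field_simps)
  next
    case 4
    define K1 where "K1 = conv (Y * inverse b) (a # inverse b # V)"
    define K2 where "K2 = conv (Y * inverse (a*b)) (a # inverse (a*b) # V)"
    define K3 where "K3 = conv (Y * inverse (a*b)) (inverse b # inverse (a*b) # V)"
    have e: "fc V Y a b = inverse K1" "fc V Y a (a * b) = inverse K2" "fc V (Y * b) b (a * b) = K3"
      using 4 a0 b0 unfolding K1_def K2_def K3_def by (simp_all add: fc_def fl_def bg_def cn_def par_def field_simps)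
    have sb: "norm (inverse b) < 1" "norm (inverse (a*b)) < 1" using 4 inv_small by blast+
    have "K2 = conv (Y * inverse (a*b) * a) (a # (a * inverse (a*b)) # V) * conv (Y * inverse (a*b)) (inverse (a*b) # (a * inverse (a*b)) # V)"
      unfolding K2_def by (rule S_gt) (use 4 V sb in auto)
    also have "a * inverse (a*b) = inverse b" using a0 b0 by (simp add: field_simps)
    also have "Y * inverse (a*b) * a = Y * inverse b" using a0 b0 by (simp add: field_simps)
    also have "conv (Y * inverse (a*b)) (inverse (a*b) # inverse b # V) = K3" unfolding K3_def by (rule Swp) (use V sb in auto)
    finally have K: "K2 = K1 * K3" unfolding K1_def .
    show ?thesis using nz1 nz2 unfolding e K by (simp add: field_simps)
  next
    case 5
    define K1 where "K1 = conv (Y * inverse a) (inverse a # b # V)"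
    define K2 where "K2 = conv (Y * inverse a) (inverse a # (a*b) # V)"
    define K3 where "K3 = conv (Y * b) (b # (a*b) # V)"
    have e: "fc V Y a b = inverse K1" "fc V Y a (a * b) = inverse K2" "fc V (Y * b) b (a * b) = K3"
      using 5 a0 b0 unfolding K1_def K2_def K3_def by (simp_all add: fc_def fl_def bg_def cn_def par_def field_simps)
    have sa: "norm (inverse a) < 1" using 5 inv_small by blast
    have "K2 = conv (Y * inverse a) (inverse a # (inverse a * (a*b)) # V) * conv (Y * inverse a * (a*b)) ((a*b) # (inverse a * (a*b)) # V)"
      unfolding K2_def by (rule S_ge) (use 5 V sa in auto)
    also have "inverse a * (a*b) = b" using a0 by simp
    also have "Y * inverse a * (a*b) = Y * b" using a0 by (simp add: field_simps)
    also have "conv (Y * b) ((a*b) # b # V) = K3" unfolding K3_def by (rule Swp) (use 5 V in auto)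
    finally have K: "K2 = K1 * K3" unfolding K1_def .
    show ?thesis using nz1 nz2 unfolding e K by (simp add: field_simps)
  next
    case 6
    define K1 where "K1 = conv (Y * inverse a) (inverse a # b # V)"
    define K2 where "K2 = conv (Y * inverse a * inverse (a*b)) (inverse a # inverse (a*b) # V)"
    define K3 where "K3 = conv (Y * inverse a) (b # inverse (a*b) # V)"
    have e: "fc V Y a b = inverse K1" "fc V Y a (a * b) = K2" "fc V (Y * b) b (a * b) = inverse K3"
      using 6 a0 b0 unfolding K1_def K2_def K3_def by (simp_all add: fc_def fl_def bg_def cn_def par_def field_simps)
    have sa: "norm (inverse a) < 1" "norm (inverse (a*b)) < 1" using 6 inv_small by blast+
    have "K3 = conv (Y * inverse a) (inverse (a*b) # b # V)" unfolding K3_def by (rule Swp) (use 6 V sa in auto)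
    also have "\<dots> = conv (Y * inverse a * inverse (a*b)) (inverse (a*b) # (inverse (a*b) * b) # V) * conv (Y * inverse a) (b # (inverse (a*b) * b) # V)"
      by (rule S_gt) (use 6 V sa in auto)
    also have "inverse (a*b) * b = inverse a" using b0 by (simp add: field_simps)
    also have "conv (Y * inverse a * inverse (a*b)) (inverse (a*b) # inverse a # V) = K2" unfolding K2_def by (rule Swp) (use 6 V sa in auto)
    also have "conv (Y * inverse a) (b # inverse a # V) = K1" unfolding K1_def by (rule Swp) (use 6 V sa in auto)
    finally have K: "K3 = K2 * K1" .
    show ?thesis using nz1 nz2 unfolding e K by (simp add: field_simps)
  qed
qed

definition BL :: "complex list \<Rightarrow> complex" where "BL R = prod_list (filter (\<lambda>q. 1 < norm q) R)"
definition KL :: "complex list \<Rightarrow> nat" where "KL R = length (filter (\<lambda>q. 1 < norm q) R)"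

lemma fl_eq: "fl = (\<lambda>q. if 1 < norm q then inverse q else q)"
  by (rule ext) (simp add: fl_def)

lemma qpoch_eq: "qpoch y R = par (KL R) (conv (inverse (BL R) * y) (map fl R))"
  unfolding qpoch_def Let_def par_def fl_eq BL_def KL_def by simp

lemma BL_Cons: "BL (a # R) = bg a * BL R" by (simp add: BL_def bg_def)
lemma KL_Cons: "KL (a # R) = cn a + KL R" by (simp add: KL_def cn_def)

lemma par_add: "par (m + n) z = par n (par m z)"
  by (simp add: par_def)
lemma par_mult: "par k (u * v) = par k u * par k v"
  by (simp add: par_def)
lemma par_nz: "par k z \<noteq> 0 \<longleftrightarrow> z \<noteq> 0"
  by (simp add: par_def)

lemma qpoch2: "qpoch y (a # b # W) = par (KL W) (fc (map fl W) (inverse (BL W) * y) a b)"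
proof -
  have "inverse (bg a * (bg b * BL W)) * y = inverse (bg a * bg b) * (inverse (BL W) * y)"
    by (simp add: mult_ac)
  moreover have "KL (a # b # W) = (cn a + cn b) + KL W" by (simp add: KL_Cons)
  ultimately show ?thesis
    unfolding qpoch_eq fc_def by (simp only: BL_Cons list.map par_add)
qed

lemma V_small: "\<forall>q\<in>set W. norm q \<noteq> 1 \<Longrightarrow> \<forall>q\<in>set (map fl W). norm q < 1"
  by (auto simp: fl_def inv_small)

lemma GS:
  assumes "a \<noteq> 0" "b \<noteq> 0" "norm a \<noteq> 1" "norm b \<noteq> 1" "norm (a * b) \<noteq> 1" "\<forall>q\<in>set W. norm q \<noteq> 1"
    and nz1: "qpoch x (a # (a * b) # W) \<noteq> 0" and nz2: "qpoch (x * b) (b # (a * b) # W) \<noteq> 0"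
  shows "qpoch x (a # b # W) = qpoch x (a # (a * b) # W) * qpoch (x * b) (b # (a * b) # W)"
proof -
  define Y where "Y = inverse (BL W) * x"
  have Yb: "inverse (BL W) * (x * b) = Y * b" unfolding Y_def by (simp add: mult.assoc)
  have n1: "fc (map fl W) Y a (a * b) \<noteq> 0" using nz1 unfolding qpoch2 Y_def par_nz .
  have n2: "fc (map fl W) (Y * b) b (a * b) \<noteq> 0" using nz2 unfolding qpoch2 Yb par_nz .
  have "fc (map fl W) Y a b = fc (map fl W) Y a (a * b) * fc (map fl W) (Y * b) b (a * b)"
    by (rule core) (use assms n1 n2 V_small in auto)
  thus ?thesis unfolding qpoch2 Yb Y_def[symmetric] by (simp add: par_mult)
qed

lemma GSwap:
  assumes "norm a \<noteq> 1" "norm b \<noteq> 1" "\<forall>q\<in>set W. norm q \<noteq> 1"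
  shows "qpoch y (a # b # W) = qpoch y (b # a # W)"
proof -
  have fa: "norm (fl a) < 1" "norm (fl b) < 1" using V_small[of "[a, b]"] assms by auto
  have "conv Z (fl a # fl b # map fl W) = conv Z (fl b # fl a # map fl W)" for Z
    by (rule Swp) (use fa V_small assms(3) in auto)
  thus ?thesis unfolding qpoch2 fc_def by (simp add: ac_simps)
qed

lemma GFlip:
  assumes "a \<noteq> 0" "norm a \<noteq> 1"
  shows "qpoch y (a # R) = inverse (qpoch (y * inverse a) (inverse a # R))"
proof (cases "1 < norm a")
  case True
  have "norm (inverse a) < 1" using True inv_small by blast
  hence c: "\<not> 1 < norm (inverse a)" by simp
  have e: "inverse (a * BL R) * y = inverse (BL R) * (y * inverse a)" by (simp add: field_simps)
  show ?thesis unfolding qpoch_eq using True c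
    by (simp add: BL_Cons KL_Cons bg_def cn_def fl_def par_def mult_ac)
next
  case False
  hence s: "norm a < 1" using assms by simp
  have c: "1 < norm (inverse a)" using inv_big[OF s assms(1)] .
  have e: "a * inverse (BL R) * (y * inverse a) = inverse (BL R) * y"
    using assms(1) by (simp add: field_simps)
  show ?thesis unfolding qpoch_eq using False c
    by (simp add: BL_Cons KL_Cons bg_def cn_def fl_def par_def e)
qed

theorem proposition2p6:
  fixes z w0 w1 :: complex and ws :: "complex list"
  assumes "Im w0 \<noteq> 0" and "Im w1 \<noteq> 0" and "\<forall>w\<in>set ws. Im w \<noteq> 0"
    and "Im (w0 + w1) \<noteq> 0"
    and "ell_gamma z (w0 # (w0 + w1) # ws) \<noteq> 0"
    and "ell_gamma z ((- w1) # (w0 + w1) # ws) \<noteq> 0"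
  shows "ell_gamma z (w0 # w1 # ws) / ell_gamma z (w0 # (w0 + w1) # ws)
       = 1 / ell_gamma z ((- w1) # (w0 + w1) # ws)"
proof -
  define e where "e w = exp (2 * pi * \<i> * w)" for w
  define x where "x = e z"
  define q0 where "q0 = e w0"
  define q1 where "q1 = e w1"
  define W where "W = map e ws"
  define pe where "pe u = (if even (Suc (length ws)) then u else inverse u)" for u :: complex
  have enz: "e w \<noteq> 0" for w unfolding e_def by simp
  have enorm: "norm (e w) \<noteq> 1" if "Im w \<noteq> 0" for w
  proof -
    have "norm (e w) = exp (Re (2 * pi * \<i> * w))" unfolding e_def by (rule norm_exp_eq_Re)
    also have "Re (2 * pi * \<i> * w) = - (2 * pi * Im w)" by simp
    finally show ?thesis using that by simp
  qed
  have e01: "e (w0 + w1) = q0 * q1" unfolding e_def q0_def q1_def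
    by (simp add: distrib_left exp_add)
  have em: "e (- w1) = inverse q1" unfolding e_def q1_def by (simp add: exp_minus)
  have hm: "map (\<lambda>w. exp (2 * pi * \<i> * w)) l = map e l" for l unfolding e_def ..
  have Wn: "\<forall>q\<in>set W. norm q \<noteq> 1" using assms(3) enorm unfolding W_def by auto
  have n0: "norm q0 \<noteq> 1" "q0 \<noteq> 0" using enorm enz assms(1) unfolding q0_def by auto
  have n1: "norm q1 \<noteq> 1" "q1 \<noteq> 0" using enorm enz assms(2) unfolding q1_def by auto
  have n01: "norm (q0 * q1) \<noteq> 1" using enorm[OF assms(4)] e01 by simp
  have n10: "norm (q1 * q0) \<noteq> 1" using n01 by (simp add: mult.commute)
  have xe: "exp (2 * pi * \<i> * z) = x" unfolding x_def e_def ..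
  have len: "length (w0 # w1 # ws) - 1 = Suc (length ws)" "length (w0 # (w0 + w1) # ws) - 1 = Suc (length ws)"
    "length ((- w1) # (w0 + w1) # ws) - 1 = Suc (length ws)" by simp_all
  have Gq: "ell_gamma z (w0 # w1 # ws) = qpoch (inverse x * prod_list (q0 # q1 # W)) (q0 # q1 # W) * pe (qpoch x (q0 # q1 # W))"
    unfolding ell_gamma_def Let_def hm xe len pe_def by (simp add: q0_def q1_def W_def)
  have Gp: "ell_gamma z (w0 # (w0 + w1) # ws) = qpoch (inverse x * prod_list (q0 # (q0 * q1) # W)) (q0 # (q0 * q1) # W) * pe (qpoch x (q0 # (q0 * q1) # W))"
    unfolding ell_gamma_def Let_def hm xe len pe_def list.map e01 by (simp add: q0_def W_def)
  have Gs: "ell_gamma z ((- w1) # (w0 + w1) # ws) = qpoch (inverse x * prod_list (inverse q1 # (q0 * q1) # W)) (inverse q1 # (q0 * q1) # W) * pe (qpoch x (inverse q1 # (q0 * q1) # W))"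
    unfolding ell_gamma_def Let_def hm xe len pe_def list.map e01 em by (simp add: W_def)
  define Ap where "Ap = qpoch (inverse x * prod_list (q0 # (q0 * q1) # W)) (q0 # (q0 * q1) # W)"
  define Bp where "Bp = qpoch x (q0 # (q0 * q1) # W)"
  define As where "As = qpoch (inverse x * prod_list (inverse q1 # (q0 * q1) # W)) (inverse q1 # (q0 * q1) # W)"
  define Bs where "Bs = qpoch x (inverse q1 # (q0 * q1) # W)"
  have penz: "pe u \<noteq> 0 \<longleftrightarrow> u \<noteq> 0" for u by (simp add: pe_def)
  have Gpnz: "Ap * pe Bp \<noteq> 0" using assms(5) unfolding Gp Ap_def Bp_def .
  have Gsnz: "As * pe Bs \<noteq> 0" using assms(6) unfolding Gs As_def Bs_def .
  have nz: "Ap \<noteq> 0" "Bp \<noteq> 0" "As \<noteq> 0" "Bs \<noteq> 0" using Gpnz Gsnz penz by auto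
  have fl1: "qpoch y (q1 # R) = inverse (qpoch (y * inverse q1) (inverse q1 # R))" for y R
    by (rule GFlip) (use n1 in auto)
  have Bq: "qpoch x (q0 # q1 # W) = Bp * inverse Bs"
  proof -
    have f: "qpoch (x * q1) (q1 # (q0 * q1) # W) = inverse Bs"
    proof -
      have "x * q1 * inverse q1 = x" using n1 by (simp add: field_simps)
      thus ?thesis unfolding fl1 Bs_def by (simp only:)
    qed
    have "qpoch x (q0 # q1 # W) = qpoch x (q0 # (q0 * q1) # W) * qpoch (x * q1) (q1 # (q0 * q1) # W)"
      by (rule GS) (use n0 n1 n01 Wn nz f in \<open>auto simp: Bp_def\<close>)
    thus ?thesis unfolding f Bp_def .
  qed
  have Aq: "qpoch (inverse x * prod_list (q0 # q1 # W)) (q0 # q1 # W) = Ap * inverse As"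
  proof -
    define X where "X = inverse x * prod_list (q0 # q1 # W)"
    have xs: "X * inverse q1 = inverse x * prod_list (inverse q1 # (q0 * q1) # W)"
      unfolding X_def using n1 by (simp add: field_simps)
    have xp: "X * q0 = inverse x * prod_list (q0 # (q0 * q1) # W)"
      unfolding X_def by (simp add: field_simps)
    have f1: "qpoch X (q1 # (q1 * q0) # W) = inverse As"
      unfolding fl1 As_def xs[symmetric] by (simp add: mult.commute)
    have f2: "qpoch (X * q0) (q0 # (q1 * q0) # W) = Ap"
      unfolding Ap_def xp[symmetric] by (simp add: mult.commute)
    have "qpoch X (q0 # q1 # W) = qpoch X (q1 # q0 # W)"
      by (rule GSwap) (use n0 n1 Wn in auto)
    also have "\<dots> = qpoch X (q1 # (q1 * q0) # W) * qpoch (X * q0) (q0 # (q1 * q0) # W)"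
      by (rule GS) (use n0 n1 n10 Wn nz f1 f2 in auto)
    finally show ?thesis unfolding X_def[symmetric] f1 f2 by simp
  qed
  show ?thesis unfolding Gq Gp Gs Aq Bq Ap_def[symmetric] Bp_def[symmetric] As_def[symmetric] Bs_def[symmetric]
    using nz by (cases "even (Suc (length ws))") (simp_all add: pe_def field_simps)
qed

end
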